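(* Let $p\in\Delta_n$ be an unknown distribution on $\{1,\dots,n\}$ and let $X^1=\{x_1,\dots,x_N\}$ be i.i.d. from $p$. Fix $\delta\in(0,1)$, let $m=\lceil\log_2 n\rceil$ and $$S=\min\Big\{S\in\mathbb N:\ \sum_{k=S}^{2S}\binom{2S}{k}\left(\tfrac13\right)^k\left(\tfrac23\right)^{2S-k}\le\frac{\delta}{\lceil\log_2 n\rceil}\Big\}.$$ For $i=1,\dots,m$ let $\rho_i=2^{-i/2}$, let $P_i>0$ be the solution of $3\left[2^{7/4}P_i^{-1/2}\rho_i^{3/2}+2P_i^{-1}\rho_i\right]=\tfrac13\rho_i^2$, and $Q_i=\lceil P_i\rceil$. Consider the following training-step: for $i=1,2,\dots$, use $4S$ consecutive segments of cardinality $Q_i$ each of $X^1$ (namely the first $4SQ_i$ observations) to build $2S$ pairs $(\xi_s,\xi'_s)$, $s=1,\dots,2S$, of empirical distributions of pairs of these segments, set $\theta_s=\xi_s^T\xi'_s$ and let $\Theta_i$ be the median of $\theta_1,\dots,\theta_{2S}$; terminate if $\Theta_i\ge 2\rho_i^2/3$, or $i=m$, or $N<4SQ_{i+1}$; otherwise proceed to $i+1$. Upon termination at stage $i$, output $\varrho=\Theta_i+\rho_i^2/3$. Let $i(p)$ be the smallest $i\le m$ such that $\rho_i\le\|p\|_2$, and assume $N\ge 4SQ_{i(p)}$. Then with probability at least $1-\delta$ the training-step terminates at some stage $\le i(p)$ and outputs $\varrho$ satisfying $\|p\|_2^2\le\varrho\le3\|p\|_2^2$. Moreover, the number of observations used by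 a training-step that terminates within the first $i(p)$ stages is at most $4SQ_{i(p)}\le C\ln(\ln(n)/\delta)/\|p\|_2$ for an absolute constant $C$.
   Context: $\Delta_n=\{r\in\mathbb{R}^n:r\ge0,\sum_ir_i=1\}$; $n\ge2$. The empirical distribution of a set of observations in $\{1,\dots,n\}$ is the vector of relative frequencies. Note $i(p)$ is well defined since $\rho_m\le n^{-1/2}\le\|p\|_2$. *)

theory Defs
  imports "HOL-Probability.Probability"
begin

definition stages :: "nat \<Rightarrow> nat" where
  "stages n = nat \<lceil>log 2 (real n)\<rceil>"

definition binom_tail :: "nat \<Rightarrow> real" where
  "binom_tail S = (\<Sum>k=S..2*S. real ((2*S) choose k) * (1/3)^k * (2/3)^(2*S-k))"

definition S_param :: "nat \<Rightarrow> real \<Rightarrow> nat" where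
  "S_param n \<delta> = (LEAST S. binom_tail S \<le> \<delta> / real (stages n))"

definition rho :: "nat \<Rightarrow> real" where
  "rho i = 2 powr (- real i / 2)"

definition P_param :: "nat \<Rightarrow> real" where
  "P_param i = (THE P. P > 0 \<and>
     3 * (2 powr (7/4) * P powr (-1/2) * rho i powr (3/2) + 2 * P powr (-1) * rho i)
       = rho i ^ 2 / 3)"

definition Q_param :: "nat \<Rightarrow> nat" where
  "Q_param i = nat \<lceil>P_param i\<rceil>"

text \<open>Empirical distribution of the j-th segment (0-indexed) of length Q of the sample x
  (observation t of the sample is x t, t = 0,1,...); evaluated at the point k.\<close>
definition emp_dist :: "(nat \<Rightarrow> nat) \<Rightarrow> nat \<Rightarrow> nat \<Rightarrow> nat \<Rightarrow> real" where
  "emp_dist x Q j k = real (card {t \<in> {..<Q}. x (j*Q + t) = k}) / real Q"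

definition theta :: "nat \<Rightarrow> (nat \<Rightarrow> nat) \<Rightarrow> nat \<Rightarrow> nat \<Rightarrow> real" where
  "theta n x Q r = (\<Sum>k=1..n. emp_dist x Q (2 * r) k * emp_dist x Q (2 * r + 1) k)"

definition median :: "real list \<Rightarrow> real" where
  "median xs = (let ys = sort xs; l = length ys in
     if even l then (ys ! (l div 2 - 1) + ys ! (l div 2)) / 2 else ys ! (l div 2))"

definition Theta :: "nat \<Rightarrow> real \<Rightarrow> (nat \<Rightarrow> nat) \<Rightarrow> nat \<Rightarrow> real" where
  "Theta n \<delta> x i = median (map (\<lambda>s. theta n x (Q_param i) s) [0..<2 * S_param n \<delta>])"

definition stop_cond :: "nat \<Rightarrow> real \<Rightarrow> nat \<Rightarrow> (nat \<Rightarrow> nat) \<Rightarrow> nat \<Rightarrow> bool" where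
  "stop_cond n \<delta> N x i \<longleftrightarrow>
     Theta n \<delta> x i \<ge> 2 * rho i ^ 2 / 3 \<or> i = stages n \<or> N < 4 * S_param n \<delta> * Q_param (i+1)"

definition stop_stage :: "nat \<Rightarrow> real \<Rightarrow> nat \<Rightarrow> (nat \<Rightarrow> nat) \<Rightarrow> nat" where
  "stop_stage n \<delta> N x = (LEAST i. 1 \<le> i \<and> stop_cond n \<delta> N x i)"

definition estimate :: "nat \<Rightarrow> real \<Rightarrow> nat \<Rightarrow> (nat \<Rightarrow> nat) \<Rightarrow> real" where
  "estimate n \<delta> N x = (let i = stop_stage n \<delta> N x in Theta n \<delta> x i + rho i ^ 2 / 3)"

definition obs_used :: "nat \<Rightarrow> real \<Rightarrow> nat \<Rightarrow> (nat \<Rightarrow> nat) \<Rightarrow> nat" where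
  "obs_used n \<delta> N x = 4 * S_param n \<delta> * Q_param (stop_stage n \<delta> N x)"

definition l2norm :: "nat pmf \<Rightarrow> nat \<Rightarrow> real" where
  "l2norm p n = sqrt (\<Sum>k=1..n. pmf p k ^ 2)"

definition i_of :: "nat \<Rightarrow> nat pmf \<Rightarrow> nat" where
  "i_of n p = (LEAST i. 1 \<le> i \<and> i \<le> stages n \<and> rho i \<le> l2norm p n)"

end

theory Submission
  imports Defs
begin

definition kap :: real where
  "kap = (sqrt (9 * (2 powr (7/4))^2 + 8) - 3 * 2 powr (7/4)) / 12"

lemma kap_eq: "6 * kap^2 + 3 * (2 powr (7/4)) * kap = 1/3"
proof -
  define a :: real where "a = 2 powr (7/4)"
  define s where "s = sqrt (9 * a^2 + 8)"
  have s2: "s^2 = 9*a^2 + 8" unfolding s_def by (simp add: add_nonneg_nonneg)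
  have "6 * ((s - 3*a)/12)^2 + 3 * a * ((s - 3*a)/12) = (s^2 - 9*a^2)/24"
    by (simp add: power2_eq_square field_simps)
  also have "\<dots> = 1/3" using s2 by simp
  finally show ?thesis unfolding kap_def a_def[symmetric] s_def[symmetric] .
qed

lemma a_ge2: "2 powr (7/4) \<ge> (2::real)"
proof -
  have "(2::real) powr 1 \<le> 2 powr (7/4)" by (intro powr_mono) auto
  thus ?thesis by simp
qed

lemma kap_pos: "kap > 0"
proof -
  define a :: real where "a = 2 powr (7/4)"
  have a: "a > 0" unfolding a_def by simp
  have "sqrt ((3*a)^2) < sqrt (9 * a^2 + 8)" by (intro real_sqrt_less_mono) (simp add: power2_eq_square)
  moreover have "sqrt ((3*a)^2) = 3*a" using a by (simp only: real_sqrt_abs)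
  ultimately have "3*a < sqrt (9 * a^2 + 8)" by linarith
  thus ?thesis unfolding kap_def a_def by simp
qed

lemma kap_le: "kap \<le> 1/18"
proof -
  have h1: "3 * (2 powr (7/4)) * kap \<le> 1/3" using kap_eq kap_pos by (smt (verit) zero_le_power2)
  have h2: "2 * kap \<le> (2 powr (7/4)) * kap" using a_ge2 kap_pos by (intro mult_right_mono) auto
  show ?thesis using h1 h2 by linarith
qed

lemma rho_pos: "rho i > 0" unfolding rho_def by simp

lemma rho_le1: "rho i \<le> 1"
proof -
  have "(2::real) powr (- real i / 2) \<le> 2 powr 0" by (rule powr_mono) auto
  thus ?thesis unfolding rho_def by simp
qed

lemma rho_Suc: "rho i = sqrt 2 * rho (Suc i)"
proof -
  have "rho i = 2 powr (1/2 + (- real (Suc i) / 2))" unfolding rho_def by (simp add: field_simps)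
  also have "\<dots> = sqrt 2 * rho (Suc i)" unfolding rho_def powr_add by (simp add: powr_half_sqrt)
  finally show ?thesis .
qed

lemma rho_mono: "i \<le> j \<Longrightarrow> rho j \<le> rho i"
  unfolding rho_def by (intro powr_mono) (auto simp: divide_right_mono)

lemma P_param_eq: "P_param i = 1 / (kap^2 * rho i)"
proof -
  define r where "r = rho i"
  define a :: real where "a = 2 powr (7/4)"
  have r: "r > 0" unfolding r_def by (rule rho_pos)
  have k: "kap > 0" by (rule kap_pos)
  have ke: "6 * kap^2 + 3 * a * kap = 1/3" unfolding a_def by (rule kap_eq)
  have r32: "r powr (3/2) = r * sqrt r"
  proof -
    have "r powr (3/2) = r powr (1 + 1/2)" by simp
    also have "\<dots> = r powr 1 * r powr (1/2)" using r by (simp only: powr_add)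
    also have "\<dots> = r * sqrt r" using r by (simp add: powr_half_sqrt)
    finally show ?thesis .
  qed
  have eqv: "3 * (a * P powr (-1/2) * r powr (3/2) + 2 * P powr (-1) * r) = r^2/3
        \<longleftrightarrow> P = 1 / (kap^2 * r)" if P: "P > 0" for P
  proof -
    define u where "u = P powr (-1/2)"
    have u: "u > 0" unfolding u_def using P by simp
    have u2: "P powr (-1) = u^2" unfolding u_def using P
      by (simp add: powr_powr[symmetric] power2_eq_square powr_add[symmetric])
    have Pu: "P = 1 / u^2" using u2 P u by (simp add: powr_minus divide_simps mult.commute)
    define v where "v = u / sqrt r"
    have v: "v > 0" unfolding v_def using u r by simp
    have uv: "u = v * sqrt r" unfolding v_def using r by simp
    have sr: "sqrt r * sqrt r = r" using r by simp
    have "3 * (a * P powr (-1/2) * r powr (3/2) + 2 * P powr (-1) * r) = r^2 * (3*a * v + 6 * v^2)"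
      unfolding u_def[symmetric] u2 r32 uv
      using r by (simp add: power2_eq_square algebra_simps sr)
    hence "3 * (a * P powr (-1/2) * r powr (3/2) + 2 * P powr (-1) * r) = r^2/3
        \<longleftrightarrow> r^2 * (3*a * v + 6 * v^2) = r^2 * (1/3)" by simp
    also have "\<dots> \<longleftrightarrow> 3*a * v + 6 * v^2 = 1/3" using r by simp
    also have "\<dots> \<longleftrightarrow> v = kap"
    proof
      assume h: "3*a * v + 6 * v^2 = 1/3"
      have "(v - kap) * (6*(v + kap) + 3*a) = 0" using h ke by (simp add: power2_eq_square algebra_simps)
      moreover have "6*(v + kap) + 3*a > 0" using v k a_ge2 unfolding a_def by simp
      ultimately show "v = kap" by simp
    qed (use ke in simp)
    also have "\<dots> \<longleftrightarrow> P = 1 / (kap^2 * r)"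
    proof
      assume "v = kap"
      thus "P = 1 / (kap^2 * r)" using Pu uv r by (simp add: power_mult_distrib)
    next
      assume h: "P = 1 / (kap^2 * r)"
      have "u^2 = (kap * sqrt r)^2" using h Pu r k by (simp add: power_mult_distrib field_simps)
      hence "u = kap * sqrt r" using u k r by (simp add: power2_eq_iff_nonneg)
      thus "v = kap" using uv r by simp
    qed
    finally show ?thesis .
  qed
  have pos: "1 / (kap^2 * r) > 0" using r k by simp
  show ?thesis unfolding P_param_def r_def[symmetric] a_def[symmetric]
  proof (rule the_equality)
    show "1 / (kap^2 * r) > 0 \<and> 3 * (a * (1 / (kap^2 * r)) powr (-1/2) * r powr (3/2) + 2 * (1 / (kap^2 * r)) powr (-1) * r) = r^2/3"
      using eqv[OF pos] pos by blast
  next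
    fix P assume "P > 0 \<and> 3 * (a * P powr (-1/2) * r powr (3/2) + 2 * P powr (-1) * r) = r^2/3"
    thus "P = 1 / (kap^2 * r)" using eqv by blast
  qed
qed

lemma Q_ge: "real (Q_param i) \<ge> 1 / (kap^2 * rho i)"
  unfolding Q_param_def P_param_eq by linarith

lemma Q_le: "real (Q_param i) \<le> 1 / (kap^2 * rho i) + 1"
proof -
  define x where "x = 1 / (kap^2 * rho i)"
  have x: "x > 0" unfolding x_def using kap_pos rho_pos by simp
  have "real (nat \<lceil>x\<rceil>) = real_of_int \<lceil>x\<rceil>" using x by simp
  also have "\<dots> \<le> x + 1" using ceiling_correct[of x] by linarith
  finally show ?thesis unfolding Q_param_def P_param_eq x_def .
qed

lemma Q_pos: "Q_param i \<ge> 1"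
proof -
  have "1 / (kap^2 * rho i) > 0" using kap_pos rho_pos by simp
  hence "\<lceil>1 / (kap^2 * rho i)\<rceil> \<ge> 1" by (simp add: zero_less_ceiling)
  thus ?thesis unfolding Q_param_def P_param_eq by linarith
qed

lemma Q_mono: "i \<le> j \<Longrightarrow> Q_param i \<le> Q_param j"
proof -
  assume "i \<le> j"
  hence "rho j \<le> rho i" by (rule rho_mono)
  hence "1 / (kap^2 * rho i) \<le> 1 / (kap^2 * rho j)" using kap_pos rho_pos
    by (intro divide_left_mono mult_left_mono) auto
  thus ?thesis unfolding Q_param_def P_param_eq by (intro nat_mono ceiling_mono)
qed

lemma binom_tail_term_le:
  assumes "S \<le> k" "k \<le> 2*S"
  shows "(1/3::real)^k * (2/3)^(2*S-k) \<le> (2/9)^S"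
proof -
  have e1: "k = S + (k - S)" using assms by simp
  have e2: "k - S + (2*S - k) = S" using assms by simp
  have "(1/3::real)^k = (1/3)^S * (1/3)^(k-S)" by (subst e1) (simp add: power_add)
  also have "\<dots> \<le> (1/3)^S * (2/3)^(k-S)" by (intro mult_left_mono power_mono) auto
  finally have "(1/3::real)^k * (2/3)^(2*S-k) \<le> (1/3)^S * (2/3)^(k-S) * (2/3)^(2*S-k)"
    by (intro mult_right_mono) auto
  also have "\<dots> = (1/3)^S * (2/3)^S" by (simp add: mult.assoc power_add[symmetric] e2)
  also have "\<dots> = (2/9)^S" by (simp add: power_mult_distrib[symmetric])
  finally show ?thesis .
qed

lemma binom_tail_le: "binom_tail S \<le> (8/9)^S"
proof -
  have "binom_tail S \<le> (\<Sum>k=S..2*S. real ((2*S) choose k) * (2/9)^S)"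
    unfolding binom_tail_def
    by (intro sum_mono) (auto simp: mult.assoc intro!: mult_left_mono binom_tail_term_le)
  also have "\<dots> \<le> (\<Sum>k\<le>2*S. real ((2*S) choose k) * (2/9)^S)"
    by (intro sum_mono2) auto
  also have "\<dots> = real (\<Sum>k\<le>2*S. (2*S) choose k) * (2/9)^S" by (simp add: sum_distrib_right)
  also have "\<dots> = 4^S * (2/9)^S" by (simp add: choose_row_sum power_mult)
  also have "\<dots> = (8/9)^S" by (simp add: power_mult_distrib[symmetric])
  finally show ?thesis .
qed

lemma binom_tail_ge: "binom_tail S \<ge> real ((2*S) choose S) * (2/9)^S"
proof -
  have "real ((2*S) choose S) * (2/9)^S = real ((2*S) choose S) * (1/3)^S * (2/3)^(2*S-S)"
    by (simp add: mult.assoc power_mult_distrib[symmetric])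
  also have "\<dots> \<le> binom_tail S" unfolding binom_tail_def
    by (rule member_le_sum[where f="\<lambda>k. real ((2*S) choose k) * (1/3)^k * (2/3)^(2*S-k)"]) auto
  finally show ?thesis .
qed

lemma binom_tail_0: "binom_tail 0 = 1" by (simp add: binom_tail_def)

lemma ln2_ge: "ln (2::real) \<ge> 1/2"
proof -
  have "ln (1/2::real) \<le> 1/2 - 1" by (rule ln_le_minus_one) auto
  thus ?thesis by (simp add: ln_div)
qed

lemma ln2_le: "ln (2::real) \<le> 1"
  using ln_le_minus_one[of "2::real"] by simp

lemma ln98_ge: "ln (9/8::real) \<ge> 1/9"
proof -
  have "ln (8/9::real) \<le> 8/9 - 1" by (rule ln_le_minus_one) auto
  moreover have "ln (8/9::real) = - ln (9/8)" by (simp add: ln_div)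
  ultimately show ?thesis by simp
qed

lemma stages_ge1: assumes "n \<ge> 2" shows "stages n \<ge> 1"
proof -
  have "log 2 (real n) \<ge> log 2 2" using assms by (intro log_le_cancel_iff[THEN iffD2]) auto
  hence "log 2 (real n) \<ge> 1" by simp
  hence "\<lceil>log 2 (real n)\<rceil> \<ge> 1" by linarith
  thus ?thesis unfolding stages_def by linarith
qed

lemma stages_le: assumes "n \<ge> 2" shows "real (stages n) \<le> log 2 (real n) + 1"
proof -
  have "log 2 (real n) \<ge> log 2 2" using assms by (intro log_le_cancel_iff[THEN iffD2]) auto
  hence "log 2 (real n) \<ge> 1" by simp
  thus ?thesis unfolding stages_def using ceiling_correct[of "log 2 (real n)"] by simp
qed

lemma stages_pow: assumes "n \<ge> 2" shows "real n \<le> 2 powr real (stages n)"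
proof -
  have "log 2 (real n) \<ge> log 2 2" using assms by (intro log_le_cancel_iff[THEN iffD2]) auto
  hence l1: "log 2 (real n) \<ge> 1" by simp
  have "real (stages n) \<ge> log 2 (real n)" unfolding stages_def using l1 by linarith
  hence "2 powr real (stages n) \<ge> 2 powr log 2 (real n)" by (intro powr_mono) auto
  thus ?thesis using assms by simp
qed

lemma stages_le_ln: assumes "n \<ge> 2" shows "real (stages n) \<le> 4 * ln (real n)"
proof -
  have ln2: "ln (2::real) \<ge> 1/2" by (rule ln2_ge)
  have lnn: "ln (real n) \<ge> ln 2" using assms by simp
  have "log 2 (real n) = ln (real n) / ln 2" by (simp add: log_def)
  also have "\<dots> \<le> 2 * ln (real n)" using ln2 lnn by (simp add: divide_simps)
  finally have "log 2 (real n) \<le> 2 * ln (real n)" .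
  moreover have "1 \<le> 2 * ln (real n)" using ln2 lnn by linarith
  ultimately show ?thesis using stages_le[OF assms] by linarith
qed

lemma S_param_props:
  assumes n: "n \<ge> 2" and d: "0 < \<delta>" "\<delta> < 1"
  shows "S_param n \<delta> \<ge> 1" "binom_tail (S_param n \<delta>) \<le> \<delta> / real (stages n)"
        "real (S_param n \<delta>) \<le> ln (real (stages n) / \<delta>) / ln (9/8) + 1"
proof -
  define m where "m = real (stages n)"
  have m1: "m \<ge> 1" using stages_ge1[OF n] unfolding m_def by simp
  have q: "\<delta>/m > 0" using d m1 by simp
  have qle: "\<delta>/m < 1" using d m1 by (simp add: divide_simps)
  define c where "c = ln (m/\<delta>) / ln (9/8)"
  have l98: "ln (9/8::real) > 0" by simp
  have md: "m/\<delta> > 1" using d m1 by (simp add: divide_simps)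
  hence lm: "ln (m/\<delta>) > 0" by simp
  define S0 where "S0 = nat \<lceil>c\<rceil>"
  have c0: "c > 0" unfolding c_def using lm l98 by simp
  have S0a: "real S0 \<ge> c" unfolding S0_def using c0 by linarith
  have S0b: "real S0 \<le> c + 1" unfolding S0_def using c0 ceiling_correct[of c] by simp
  have "(8/9::real)^S0 \<le> \<delta>/m"
  proof -
    have "real S0 * ln (9/8) \<ge> c * ln (9/8)" using S0a l98 by (intro mult_right_mono) auto
    also have "c * ln (9/8) = ln (m/\<delta>)" unfolding c_def using l98 by simp
    finally have h: "real S0 * ln (9/8) \<ge> ln (m/\<delta>)" .
    have "ln ((8/9::real)^S0) = real S0 * ln (8/9)" by (simp add: ln_realpow)
    also have "\<dots> = - (real S0 * ln (9/8))" by (simp add: ln_div algebra_simps)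
    also have "\<dots> \<le> - ln (m/\<delta>)" using h by simp
    also have "\<dots> = ln (\<delta>/m)" using d m1 by (simp add: ln_div)
    finally have "ln ((8/9::real)^S0) \<le> ln (\<delta>/m)" .
    thus ?thesis using q by (subst (asm) ln_le_cancel_iff) auto
  qed
  hence bt: "binom_tail S0 \<le> \<delta>/m" using binom_tail_le[of S0] by linarith
  have le: "S_param n \<delta> \<le> S0" unfolding S_param_def m_def[symmetric] by (rule Least_le) (rule bt)
  show b: "binom_tail (S_param n \<delta>) \<le> \<delta> / real (stages n)"
    unfolding S_param_def m_def[symmetric] by (rule LeastI) (rule bt)
  show "S_param n \<delta> \<ge> 1"
  proof (rule ccontr)
    assume "\<not> S_param n \<delta> \<ge> 1"
    hence "S_param n \<delta> = 0" by simp
    with b have "1 \<le> \<delta>/m" by (simp add: binom_tail_0 m_def)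
    with qle show False by simp
  qed
  show "real (S_param n \<delta>) \<le> ln (real (stages n) / \<delta>) / ln (9/8) + 1"
    using le S0b unfolding c_def m_def by linarith
qed

lemma median_good:
  fixes xs :: "real list"
  assumes len: "length xs = 2*S" and S: "S \<ge> 1"
    and few: "card {j. j < length xs \<and> \<not> (lo \<le> xs!j \<and> xs!j \<le> hi)} < S"
  shows "lo \<le> median xs \<and> median xs \<le> hi"
proof -
  define ys where "ys = sort xs"
  have ly: "length ys = 2*S" unfolding ys_def using len by simp
  have sy: "sorted ys" unfolding ys_def by simp
  have cnt: "length (filter P ys) = length (filter P xs)" for P
  proof -
    have "mset ys = mset xs" unfolding ys_def by simp
    hence "mset (filter P ys) = mset (filter P xs)" by (simp add: mset_filter)
    thus ?thesis by (metis size_mset)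
  qed
  have few': "length (filter P xs) < S" if "\<And>v. P v \<Longrightarrow> \<not> (lo \<le> v \<and> v \<le> hi)" for P
  proof -
    have "length (filter P xs) = card {j. j < length xs \<and> P (xs!j)}" by (rule length_filter_conv_card)
    also have "\<dots> \<le> card {j. j < length xs \<and> \<not> (lo \<le> xs!j \<and> xs!j \<le> hi)}"
      by (intro card_mono) (auto dest: that)
    finally show ?thesis using few by linarith
  qed
  have A: "lo \<le> ys!(S-1)"
  proof (rule ccontr)
    assume "\<not> lo \<le> ys!(S-1)"
    hence h: "ys!j < lo" if "j < S" for j
      using sorted_nth_mono[OF sy, of j "S-1"] that ly S by fastforce
    have "S = card {..<S}" by simp
    also have "\<dots> \<le> card {j. j < length ys \<and> ys!j < lo}"
      by (intro card_mono) (use h ly in auto)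
    also have "\<dots> = length (filter (\<lambda>v. v < lo) ys)" by (rule length_filter_conv_card[symmetric])
    also have "\<dots> = length (filter (\<lambda>v. v < lo) xs)" by (rule cnt)
    finally show False using few'[of "\<lambda>v. v < lo"] by auto
  qed
  have B: "ys!S \<le> hi"
  proof (rule ccontr)
    assume "\<not> ys!S \<le> hi"
    hence h: "ys!j > hi" if "S \<le> j" "j < 2*S" for j
      using sorted_nth_mono[OF sy, of S j] that ly S by fastforce
    have "S = card {S..<2*S}" by simp
    also have "\<dots> \<le> card {j. j < length ys \<and> ys!j > hi}"
      by (intro card_mono) (use h ly in auto)
    also have "\<dots> = length (filter (\<lambda>v. v > hi) ys)" by (rule length_filter_conv_card[symmetric])
    also have "\<dots> = length (filter (\<lambda>v. v > hi) xs)" by (rule cnt)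
    finally show False using few'[of "\<lambda>v. v > hi"] by auto
  qed
  have C: "ys!(S-1) \<le> ys!S" using sorted_nth_mono[OF sy, of "S-1" S] ly S by simp
  have med: "median xs = (ys!(S-1) + ys!S)/2"
    unfolding median_def Let_def ys_def[symmetric] ly using S by simp
  show ?thesis unfolding med using A B C by simp
qed

lemma fin_set_Pi_pmf:
  assumes "finite (set_pmf p)"
  shows "finite (set_pmf (Pi_pmf {..<(N::nat)} d (\<lambda>_. p)))"
  using assms by (subst set_Pi_pmf) (auto intro!: finite_PiE_dflt)

lemma integrable_Pi:
  assumes "finite (set_pmf p)"
  shows "integrable (measure_pmf (Pi_pmf {..<(N::nat)} d (\<lambda>_. p))) (f :: _ \<Rightarrow> real)"
  by (rule integrable_measure_pmf_finite[OF fin_set_Pi_pmf[OF assms]])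

lemma expectation_component:
  assumes "i < N"
  shows "measure_pmf.expectation (Pi_pmf {..<(N::nat)} d (\<lambda>_. p)) (\<lambda>x. f (x i)) = measure_pmf.expectation p (f :: _ \<Rightarrow> real)"
proof -
  have "map_pmf (\<lambda>x. x i) (Pi_pmf {..<(N::nat)} d (\<lambda>_. p)) = p"
    using assms by (subst Pi_pmf_component) auto
  hence "measure_pmf.expectation p f = measure_pmf.expectation (map_pmf (\<lambda>x. x i) (Pi_pmf {..<(N::nat)} d (\<lambda>_. p))) f"
    by simp
  also have "\<dots> = measure_pmf.expectation (Pi_pmf {..<(N::nat)} d (\<lambda>_. p)) (\<lambda>x. f (x i))"
    by (rule integral_map_pmf)
  finally show ?thesis by simp
qed

lemma PiM_count_space_nat:
  assumes "finite K"
  shows "PiM K (\<lambda>_. count_space (UNIV :: nat set)) = count_space (PiE K (\<lambda>_. UNIV))"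
  using count_space_PiM_finite[of K "\<lambda>_. UNIV :: nat set"] assms by simp

lemma indep_two_blocks:
  fixes F G :: "(nat \<Rightarrow> nat) \<Rightarrow> real"
  assumes fin: "finite (set_pmf p)"
    and AB: "A \<subseteq> {..<N}" "B \<subseteq> {..<N}" "A \<inter> B = {}"
    and F: "\<And>x y. (\<And>i. i \<in> A \<Longrightarrow> x i = y i) \<Longrightarrow> F x = F y"
    and G: "\<And>x y. (\<And>i. i \<in> B \<Longrightarrow> x i = y i) \<Longrightarrow> G x = G y"
  shows "measure_pmf.expectation (Pi_pmf {..<(N::nat)} d (\<lambda>_. p)) (\<lambda>x. F x * G x) =
         measure_pmf.expectation (Pi_pmf {..<(N::nat)} d (\<lambda>_. p)) F * measure_pmf.expectation (Pi_pmf {..<(N::nat)} d (\<lambda>_. p)) G"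
proof -
  define M where "M = measure_pmf (Pi_pmf {..<(N::nat)} d (\<lambda>_. p))"
  interpret prob_space M unfolding M_def by (rule measure_pmf.prob_space_axioms)
  have ind: "indep_vars (\<lambda>_. count_space UNIV) (\<lambda>i x. x i) {..<N}"
    unfolding M_def by (rule indep_vars_Pi_pmf) simp
  have iv: "indep_var (PiM A (\<lambda>_. count_space UNIV)) (\<lambda>\<omega>. restrict (\<lambda>i. \<omega> i) A)
                      (PiM B (\<lambda>_. count_space UNIV)) (\<lambda>\<omega>. restrict (\<lambda>i. \<omega> i) B)"
    by (rule indep_var_restrict[OF ind]) (use AB in auto)
  have finA: "finite A" using AB(1) finite_subset by blast
  have finB: "finite B" using AB(2) finite_subset by blast
  have mF: "F \<in> measurable (PiM A (\<lambda>_. count_space UNIV)) borel"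
    using finA by (simp add: PiM_count_space_nat)
  have mG: "G \<in> measurable (PiM B (\<lambda>_. count_space UNIV)) borel"
    using finB by (simp add: PiM_count_space_nat)
  have iv2: "indep_var borel (F \<circ> (\<lambda>\<omega>. restrict (\<lambda>i. \<omega> i) A)) borel (G \<circ> (\<lambda>\<omega>. restrict (\<lambda>i. \<omega> i) B))"
    by (rule indep_var_compose[OF iv mF mG])
  have eF: "(F \<circ> (\<lambda>\<omega>. restrict (\<lambda>i. \<omega> i) A)) = F"
    by (rule ext) (auto intro!: F)
  have eG: "(G \<circ> (\<lambda>\<omega>. restrict (\<lambda>i. \<omega> i) B)) = G"
    by (rule ext) (auto intro!: G)
  have iv3: "indep_var borel F borel G" using iv2 unfolding eF eG .
  have "(\<integral>\<omega>. F \<omega> * G \<omega> \<partial>M) = (\<integral>\<omega>. F \<omega> \<partial>M) * (\<integral>\<omega>. G \<omega> \<partial>M)"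
    by (rule indep_var_lebesgue_integral[OF iv3]) (auto simp: M_def intro: integrable_Pi[OF fin])
  thus ?thesis unfolding M_def .
qed

lemma indep_blocks_events:
  fixes p :: "nat pmf"
  assumes T: "finite T" "T \<noteq> {}"
    and K: "\<And>s. s \<in> T \<Longrightarrow> K s \<subseteq> {..<N}" "disjoint_family_on K T"
    and E: "\<And>s x y. s \<in> T \<Longrightarrow> (\<And>i. i \<in> K s \<Longrightarrow> x i = y i) \<Longrightarrow> x \<in> E s \<longleftrightarrow> y \<in> E s"
  shows "measure_pmf.prob (Pi_pmf {..<(N::nat)} d (\<lambda>_. p)) (\<Inter>s\<in>T. E s) =
         (\<Prod>s\<in>T. measure_pmf.prob (Pi_pmf {..<(N::nat)} d (\<lambda>_. p)) (E s))"
proof -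
  define M where "M = measure_pmf (Pi_pmf {..<(N::nat)} d (\<lambda>_. p))"
  interpret prob_space M unfolding M_def by (rule measure_pmf.prob_space_axioms)
  have ind: "indep_vars (\<lambda>_. count_space UNIV) (\<lambda>i x. x i) {..<N}"
    unfolding M_def by (rule indep_vars_Pi_pmf) simp
  have iv: "indep_vars (\<lambda>s. PiM (K s) (\<lambda>_. count_space UNIV)) (\<lambda>s \<omega>. restrict (\<lambda>i. \<omega> i) (K s)) T"
    by (rule indep_vars_restrict[OF ind]) (use K in auto)
  define A where "A s = {g \<in> PiE (K s) (\<lambda>_. UNIV). g \<in> E s}" for s
  have finK: "finite (K s)" if "s \<in> T" for s using K(1)[OF that] finite_subset by blast
  have Asets: "A s \<in> sets (PiM (K s) (\<lambda>_. count_space UNIV))" if "s \<in> T" for s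
    using finK[OF that] by (simp add: PiM_count_space_nat A_def)
  have pre: "(\<lambda>\<omega>. restrict (\<lambda>i. \<omega> i) (K s)) -` A s \<inter> space M = E s" if "s \<in> T" for s
  proof -
    have "restrict \<omega> (K s) \<in> E s \<longleftrightarrow> \<omega> \<in> E s" for \<omega>
      by (rule E[OF that]) simp
    thus ?thesis by (auto simp: A_def M_def)
  qed
  have "prob (\<Inter>s\<in>T. (\<lambda>\<omega>. restrict (\<lambda>i. \<omega> i) (K s)) -` A s \<inter> space M) =
        (\<Prod>s\<in>T. prob ((\<lambda>\<omega>. restrict (\<lambda>i. \<omega> i) (K s)) -` A s \<inter> space M))"
    by (rule indep_varsD[OF iv]) (use T Asets in auto)
  thus ?thesis using pre unfolding M_def by simp
qed

definition ind :: "(nat \<Rightarrow> nat) \<Rightarrow> nat \<Rightarrow> nat \<Rightarrow> real" where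
  "ind x i k = (if x i = k then 1 else 0)"

definition xi :: "(nat \<Rightarrow> nat) \<Rightarrow> nat \<Rightarrow> nat \<Rightarrow> nat \<Rightarrow> real" where
  "xi x a Q k = (\<Sum>t<Q. ind x (a+t) k) / real Q"

lemma emp_dist_xi: "emp_dist x Q j k = xi x (j* Q) Q k"
proof -
  have "real (card {t \<in> {..<Q}. x (j* Q+t) = k}) = (\<Sum>t\<in>{t \<in> {..<Q}. x (j* Q+t) = k}. 1)"
    by simp
  also have "\<dots> = (\<Sum>t<Q. ind x (j* Q+t) k)"
    by (subst sum.inter_filter) (auto simp: ind_def)
  finally show ?thesis unfolding emp_dist_def xi_def by simp
qed

lemma theta_xi: "theta n x Q s = (\<Sum>k=1..n. xi x (2* s* Q) Q k * xi x ((2* s+1)* Q) Q k)"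
  unfolding theta_def emp_dist_xi by (simp add: mult.assoc)

lemma xi_dep: "(\<And>i. i \<in> {a..<a+Q} \<Longrightarrow> x i = y i) \<Longrightarrow> xi x a Q k = xi y a Q k"
  unfolding xi_def ind_def by (intro arg_cong2[where f="(/)"] sum.cong) auto

lemma theta_dep: "(\<And>i. i \<in> {2* s* Q..<(2* s+2)* Q} \<Longrightarrow> x i = y i) \<Longrightarrow> theta n x Q s = theta n y Q s"
  unfolding theta_xi
proof (intro sum.cong refl arg_cong2[where f="(*)"] xi_dep)
  fix i assume h: "\<And>i. i \<in> {2* s* Q..<(2* s+2)* Q} \<Longrightarrow> x i = y i"
  show "i \<in> {2* s* Q..<2* s* Q+Q} \<Longrightarrow> x i = y i" by (rule h) (auto simp: algebra_simps)
  show "i \<in> {(2* s+1)* Q..<(2* s+1)* Q+Q} \<Longrightarrow> x i = y i" by (rule h) (auto simp: algebra_simps)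
qed

lemma sum_if_diag:
  fixes c d :: real
  shows "(\<Sum>t<Q. \<Sum>u<Q. if t = u then c else d) = real Q * c + (real Q ^ 2 - real Q) * d"
proof -
  have "(\<Sum>u<Q. if t = u then c else d) = real Q * d + (c - d)" if "t < Q" for t
  proof -
    have "(\<Sum>u<Q. if t = u then c else d) = (\<Sum>u<Q. d + (if t = u then c - d else 0))"
      by (intro sum.cong) auto
    also have "\<dots> = real Q * d + (c - d)" using that by (simp add: sum.distrib)
    finally show ?thesis .
  qed
  hence "(\<Sum>t<Q. \<Sum>u<Q. if t = u then c else d) = (\<Sum>t<Q. real Q * d + (c - d))" by simp
  also have "\<dots> = real Q * c + (real Q ^ 2 - real Q) * d" by (simp add: algebra_simps power2_eq_square)
  finally show ?thesis .
qed

context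
  fixes p :: "nat pmf" and n N :: nat
  assumes sp: "set_pmf p \<subseteq> {1..n}"
begin

abbreviation "MM \<equiv> Pi_pmf {..<N} 0 (\<lambda>_. p)"
abbreviation "EE \<equiv> measure_pmf.expectation MM"

lemma finp: "finite (set_pmf p)" using sp finite_subset by blast

lemma intM: "integrable (measure_pmf MM) (f :: _ \<Rightarrow> real)"
  by (rule integrable_Pi[OF finp])

lemma E_ind: "i < N \<Longrightarrow> EE (\<lambda>x. ind x i k) = pmf p k"
proof -
  assume i: "i < N"
  have "EE (\<lambda>x. ind x i k) = measure_pmf.expectation p (\<lambda>v. if v = k then 1 else 0)"
    unfolding ind_def by (rule expectation_component[OF i])
  also have "\<dots> = (\<Sum>a\<in>{k}. (if a = k then 1 else 0) * pmf p a)"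
    by (rule integral_measure_pmf_real) (auto split: if_splits)
  finally show ?thesis by simp
qed

lemma E_ind_same: "i < N \<Longrightarrow> EE (\<lambda>x. ind x i k * ind x i l) = (if k = l then pmf p k else 0)"
proof -
  assume i: "i < N"
  have "EE (\<lambda>x. ind x i k * ind x i l) = measure_pmf.expectation p (\<lambda>v. (if v = k then 1 else 0) * (if v = l then 1 else 0))"
    unfolding ind_def by (rule expectation_component[OF i])
  also have "\<dots> = (\<Sum>a\<in>{k}. ((if a = k then 1 else 0) * (if a = l then 1 else 0)) * pmf p a)"
    by (rule integral_measure_pmf_real) (auto split: if_splits)
  finally show ?thesis by simp
qed

lemma E_ind_diff: "i < N \<Longrightarrow> j < N \<Longrightarrow> i \<noteq> j \<Longrightarrow> EE (\<lambda>x. ind x i k * ind x j l) = pmf p k * pmf p l"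
proof -
  assume ij: "i < N" "j < N" "i \<noteq> j"
  have "EE (\<lambda>x. ind x i k * ind x j l) = EE (\<lambda>x. ind x i k) * EE (\<lambda>x. ind x j l)"
    by (rule indep_two_blocks[OF finp, of "{i}" N "{j}"]) (use ij in \<open>auto simp: ind_def\<close>)
  thus ?thesis using E_ind ij by simp
qed

lemma E_xi: "a + Q \<le> N \<Longrightarrow> Q \<ge> 1 \<Longrightarrow> EE (\<lambda>x. xi x a Q k) = pmf p k"
proof -
  assume h: "a + Q \<le> N" "Q \<ge> 1"
  have "EE (\<lambda>x. xi x a Q k) = (\<Sum>t<Q. EE (\<lambda>x. ind x (a+t) k)) / real Q"
    unfolding xi_def by (simp add: Bochner_Integration.integral_sum[OF intM])
  also have "\<dots> = (\<Sum>t<Q. pmf p k) / real Q"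
    using h by (intro arg_cong2[where f="(/)"] sum.cong refl E_ind) auto
  finally show ?thesis using h by simp
qed

definition mkl :: "nat \<Rightarrow> nat \<Rightarrow> nat \<Rightarrow> real" where
  "mkl Q k l = (if k = l then pmf p k / real Q else 0) + (1 - 1 / real Q) * pmf p k * pmf p l"

lemma E_xixi: "a + Q \<le> N \<Longrightarrow> Q \<ge> 1 \<Longrightarrow> EE (\<lambda>x. xi x a Q k * xi x a Q l) = mkl Q k l"
proof -
  assume h: "a + Q \<le> N" "Q \<ge> 1"
  have eq: "xi x a Q k * xi x a Q l = (\<Sum>t<Q. \<Sum>u<Q. ind x (a+t) k * ind x (a+u) l) / (real Q ^ 2)" for x
    unfolding xi_def by (simp add: sum_product power2_eq_square)
  have "EE (\<lambda>x. xi x a Q k * xi x a Q l) = (\<Sum>t<Q. \<Sum>u<Q. EE (\<lambda>x. ind x (a+t) k * ind x (a+u) l)) / (real Q ^ 2)"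
    unfolding eq by (simp add: Bochner_Integration.integral_sum[OF intM])
  also have "\<dots> = (\<Sum>t<Q. \<Sum>u<Q. if t = u then (if k = l then pmf p k else 0) else pmf p k * pmf p l) / (real Q ^ 2)"
    using h by (intro arg_cong2[where f="(/)"] sum.cong refl) (auto simp: E_ind_same E_ind_diff)
  also have "\<dots> = (real Q * (if k = l then pmf p k else 0) + (real Q ^ 2 - real Q) * (pmf p k * pmf p l)) / (real Q ^ 2)"
    by (simp only: sum_if_diag)
  also have "\<dots> = mkl Q k l" using h unfolding mkl_def by (simp add: field_simps power2_eq_square)
  finally show ?thesis .
qed

lemma E_theta: "(2* s+2)* Q \<le> N \<Longrightarrow> Q \<ge> 1 \<Longrightarrow> EE (\<lambda>x. theta n x Q s) = (\<Sum>k=1..n. pmf p k ^ 2)"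
proof -
  assume h: "(2* s+2)* Q \<le> N" "Q \<ge> 1"
  have "EE (\<lambda>x. theta n x Q s) = (\<Sum>k=1..n. EE (\<lambda>x. xi x (2* s* Q) Q k * xi x ((2* s+1)* Q) Q k))"
    unfolding theta_xi by (simp add: Bochner_Integration.integral_sum[OF intM])
  also have "\<dots> = (\<Sum>k=1..n. EE (\<lambda>x. xi x (2* s* Q) Q k) * EE (\<lambda>x. xi x ((2* s+1)* Q) Q k))"
  proof (intro sum.cong refl)
    fix k
    show "EE (\<lambda>x. xi x (2* s* Q) Q k * xi x ((2* s+1)* Q) Q k) = EE (\<lambda>x. xi x (2* s* Q) Q k) * EE (\<lambda>x. xi x ((2* s+1)* Q) Q k)"
      by (rule indep_two_blocks[OF finp, of "{2* s* Q..<2* s* Q+Q}" N "{(2* s+1)* Q..<(2* s+1)* Q+Q}"])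
         (use h in \<open>auto simp: algebra_simps intro: xi_dep\<close>)
  qed
  also have "\<dots> = (\<Sum>k=1..n. pmf p k ^ 2)"
    using h by (intro sum.cong refl) (simp add: E_xi algebra_simps power2_eq_square)
  finally show ?thesis .
qed

lemma E_theta2: "(2* s+2)* Q \<le> N \<Longrightarrow> Q \<ge> 1 \<Longrightarrow>
  EE (\<lambda>x. (theta n x Q s)^2) = (\<Sum>k=1..n. \<Sum>l=1..n. (mkl Q k l)^2)"
proof -
  assume h: "(2* s+2)* Q \<le> N" "Q \<ge> 1"
  define a where "a = 2* s* Q"
  define b where "b = (2* s+1)* Q"
  have eq: "(theta n x Q s)^2 = (\<Sum>k=1..n. \<Sum>l=1..n. (xi x a Q k * xi x a Q l) * (xi x b Q k * xi x b Q l))" for x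
    unfolding theta_xi a_def[symmetric] b_def[symmetric] power2_eq_square sum_product
    by (intro sum.cong refl) (simp add: algebra_simps)
  have "EE (\<lambda>x. (theta n x Q s)^2) = (\<Sum>k=1..n. \<Sum>l=1..n. EE (\<lambda>x. (xi x a Q k * xi x a Q l) * (xi x b Q k * xi x b Q l)))"
    unfolding eq by (simp add: Bochner_Integration.integral_sum[OF intM])
  also have "\<dots> = (\<Sum>k=1..n. \<Sum>l=1..n. EE (\<lambda>x. xi x a Q k * xi x a Q l) * EE (\<lambda>x. xi x b Q k * xi x b Q l))"
  proof (intro sum.cong refl)
    fix k l
    show "EE (\<lambda>x. (xi x a Q k * xi x a Q l) * (xi x b Q k * xi x b Q l)) = EE (\<lambda>x. xi x a Q k * xi x a Q l) * EE (\<lambda>x. xi x b Q k * xi x b Q l)"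
    proof (rule indep_two_blocks[OF finp, of "{a..<a+Q}" N "{b..<b+Q}"])
      show "{a..<a+Q} \<subseteq> {..<N}" "{b..<b+Q} \<subseteq> {..<N}" "{a..<a+Q} \<inter> {b..<b+Q} = {}"
        using h unfolding a_def b_def by (auto simp: algebra_simps)
    next
      fix x y :: "nat \<Rightarrow> nat" assume "\<And>i. i \<in> {a..<a+Q} \<Longrightarrow> x i = y i"
      thus "xi x a Q k * xi x a Q l = xi y a Q k * xi y a Q l" using xi_dep by metis
    next
      fix x y :: "nat \<Rightarrow> nat" assume "\<And>i. i \<in> {b..<b+Q} \<Longrightarrow> x i = y i"
      thus "xi x b Q k * xi x b Q l = xi y b Q k * xi y b Q l" using xi_dep by metis
    qed
  qed
  also have "\<dots> = (\<Sum>k=1..n. \<Sum>l=1..n. (mkl Q k l)^2)"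
    using h unfolding a_def b_def
    by (intro sum.cong refl) (simp add: E_xixi algebra_simps power2_eq_square)
  finally show ?thesis .
qed

end

lemma blocks_disjoint: "disjoint_family_on (\<lambda>s. {2 * s * Q..<(2 * s+2) * (Q::nat)}) T"
proof (unfold disjoint_family_on_def, intro ballI impI)
  have aux: "(2 * s+2) * Q \<le> 2 * s' * Q" if "s < s'" for s s' :: nat
  proof -
    have "2 * s + 2 \<le> 2 * s'" using that by simp
    thus ?thesis by (rule mult_right_mono) simp
  qed
  fix s s' assume "s \<in> T" "s' \<in> T" "s \<noteq> s'"
  hence "s < s' \<or> s' < s" by arith
  thus "{2 * s * Q..<(2 * s+2) * Q} \<inter> {2 * s' * Q..<(2 * s'+2) * Q} = {}"
    using aux[of s s'] aux[of s' s] by auto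
qed

context
  fixes p :: "nat pmf" and n N :: nat
  assumes sp: "set_pmf p \<subseteq> {1..n}"
begin

lemma sum_mkl_sq:
  "(\<Sum>k=1..n. \<Sum>l=1..n. (mkl p Q k l)^2) =
     (1/real Q)^2 * (\<Sum>k=1..n. pmf p k ^2) + 2 * (1/real Q) * (1 - 1/real Q) * (\<Sum>k=1..n. pmf p k ^3)
     + (1 - 1/real Q)^2 * (\<Sum>k=1..n. pmf p k ^2)^2"
proof -
  define \<alpha> where "\<alpha> = 1/real Q"
  define s2 where "s2 = (\<Sum>k=1..n. pmf p k ^2)"
  have m: "mkl p Q k l = (if k = l then \<alpha> * pmf p k else 0) + (1-\<alpha>) * pmf p k * pmf p l" for k l
    by (simp add: mkl_def[OF sp] \<alpha>_def)
  have pt: "(mkl p Q k l)^2 = (if k = l then \<alpha>^2 * pmf p k^2 + 2 * \<alpha> * (1-\<alpha>) * pmf p k^3 else 0)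
             + (1-\<alpha>)^2 * pmf p k^2 * pmf p l^2" for k l
  proof (cases "k = l")
    case True thus ?thesis by (simp add: m power2_eq_square power3_eq_cube algebra_simps)
  next
    case False thus ?thesis by (simp add: m power2_eq_square algebra_simps)
  qed
  have inner: "(\<Sum>l=1..n. (mkl p Q k l)^2) = (\<alpha>^2 * pmf p k^2 + 2 * \<alpha> * (1-\<alpha>) * pmf p k^3)
             + (1-\<alpha>)^2 * pmf p k^2 * s2" if "k \<in> {1..n}" for k
  proof -
    have "(\<Sum>l=1..n. (mkl p Q k l)^2) = (\<Sum>l=1..n. (if k = l then \<alpha>^2 * pmf p k^2 + 2 * \<alpha> * (1-\<alpha>) * pmf p k^3 else 0))
             + (\<Sum>l=1..n. (1-\<alpha>)^2 * pmf p k^2 * pmf p l^2)"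
      unfolding pt by (rule sum.distrib)
    also have "(\<Sum>l=1..n. (if k = l then \<alpha>^2 * pmf p k^2 + 2 * \<alpha> * (1-\<alpha>) * pmf p k^3 else 0)) =
               \<alpha>^2 * pmf p k^2 + 2 * \<alpha> * (1-\<alpha>) * pmf p k^3" using that by simp
    also have "(\<Sum>l=1..n. (1-\<alpha>)^2 * pmf p k^2 * pmf p l^2) = (1-\<alpha>)^2 * pmf p k^2 * s2"
      by (simp add: s2_def sum_distrib_left)
    finally show ?thesis .
  qed
  have "(\<Sum>k=1..n. \<Sum>l=1..n. (mkl p Q k l)^2) =
        (\<Sum>k=1..n. (\<alpha>^2 * pmf p k^2 + 2 * \<alpha> * (1-\<alpha>) * pmf p k^3) + (1-\<alpha>)^2 * pmf p k^2 * s2)"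
    by (rule sum.cong[OF refl]) (rule inner)
  also have "\<dots> = (\<Sum>k=1..n. \<alpha>^2 * pmf p k^2) + (\<Sum>k=1..n. 2 * \<alpha> * (1-\<alpha>) * pmf p k^3)
                   + (\<Sum>k=1..n. (1-\<alpha>)^2 * pmf p k^2 * s2)"
    by (simp add: sum.distrib)
  also have "(\<Sum>k=1..n. \<alpha>^2 * pmf p k^2) = \<alpha>^2 * s2"
    unfolding s2_def by (rule sum_distrib_left[symmetric])
  also have "(\<Sum>k=1..n. 2 * \<alpha> * (1-\<alpha>) * pmf p k^3) = 2 * \<alpha> * (1-\<alpha>) * (\<Sum>k=1..n. pmf p k ^3)"
    by (rule sum_distrib_left[symmetric])
  also have "(\<Sum>k=1..n. (1-\<alpha>)^2 * pmf p k^2 * s2) = (\<Sum>k=1..n. (1-\<alpha>)^2 * pmf p k^2) * s2"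
    by (rule sum_distrib_right[symmetric])
  also have "(\<Sum>k=1..n. (1-\<alpha>)^2 * pmf p k^2) = (1-\<alpha>)^2 * s2"
    unfolding s2_def by (rule sum_distrib_left[symmetric])
  also have "\<alpha>^2 * s2 + 2 * \<alpha> * (1-\<alpha>) * (\<Sum>k=1..n. pmf p k ^3) + (1-\<alpha>)^2 * s2 * s2 =
             \<alpha>^2 * s2 + 2 * \<alpha> * (1-\<alpha>) * (\<Sum>k=1..n. pmf p k ^3) + (1-\<alpha>)^2 * s2^2"
    by (simp add: power2_eq_square)
  finally show ?thesis unfolding \<alpha>_def s2_def .
qed

lemma var_bound:
  assumes Q: "Q \<ge> 1"
  shows "(\<Sum>k=1..n. \<Sum>l=1..n. (mkl p Q k l)^2) - (\<Sum>k=1..n. pmf p k ^2)^2 \<le>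
         (\<Sum>k=1..n. pmf p k ^2) / real Q ^ 2 + 2 * (\<Sum>k=1..n. pmf p k ^3) / real Q"
proof -
  define \<alpha> where "\<alpha> = 1/real Q"
  define s2 where "s2 = (\<Sum>k=1..n. pmf p k ^2)"
  define s3 where "s3 = (\<Sum>k=1..n. pmf p k ^3)"
  have a0: "\<alpha> > 0" "\<alpha> \<le> 1" using Q by (auto simp: \<alpha>_def)
  have s2: "s2 \<ge> 0" unfolding s2_def by (intro sum_nonneg) auto
  have s3: "s3 \<ge> 0" unfolding s3_def by (intro sum_nonneg) auto
  have h1: "2 * \<alpha> * (1-\<alpha>) * s3 \<le> 2 * \<alpha> * s3"
    using a0 s3 by (intro mult_right_mono) auto
  have h2: "(1-\<alpha>)^2 * s2^2 \<le> s2^2"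
  proof -
    have "(1-\<alpha>)^2 \<le> 1" using a0 by (intro power_le_one) auto
    thus ?thesis by (intro mult_left_le_one_le) auto
  qed
  have "(\<Sum>k=1..n. \<Sum>l=1..n. (mkl p Q k l)^2) = \<alpha>^2 * s2 + 2 * \<alpha> * (1-\<alpha>) * s3 + (1-\<alpha>)^2 * s2^2"
    unfolding sum_mkl_sq \<alpha>_def s2_def s3_def ..
  hence "(\<Sum>k=1..n. \<Sum>l=1..n. (mkl p Q k l)^2) - s2^2 \<le> \<alpha>^2 * s2 + 2 * \<alpha> * s3"
    using h1 h2 by linarith
  thus ?thesis unfolding \<alpha>_def s2_def s3_def by (simp add: power_divide)
qed

lemma theta_tail:
  assumes h: "(2 * s+2) * Q \<le> N" "Q \<ge> 1" and t: "t > 0"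
  shows "measure_pmf.prob (Pi_pmf {..<N} 0 (\<lambda>_. p)) {x. t \<le> \<bar>theta n x Q s - (\<Sum>k=1..n. pmf p k ^2)\<bar>}
          \<le> ((\<Sum>k=1..n. pmf p k ^2) / real Q ^ 2 + 2 * (\<Sum>k=1..n. pmf p k ^3) / real Q) / t^2"
proof -
  define M where "M = measure_pmf (Pi_pmf {..<N} 0 (\<lambda>_. p))"
  interpret prob_space M unfolding M_def by (rule measure_pmf.prob_space_axioms)
  define f where "f x = theta n x Q s" for x
  have int: "integrable M g" for g :: "_ \<Rightarrow> real" unfolding M_def by (rule intM[OF sp])
  have Ef: "expectation f = (\<Sum>k=1..n. pmf p k ^2)"
    unfolding f_def M_def by (rule E_theta[OF sp h])
  have Ef2: "expectation (\<lambda>x. (f x)^2) = (\<Sum>k=1..n. \<Sum>l=1..n. (mkl p Q k l)^2)"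
    unfolding f_def M_def by (rule E_theta2[OF sp h])
  have var: "variance f = (\<Sum>k=1..n. \<Sum>l=1..n. (mkl p Q k l)^2) - (\<Sum>k=1..n. pmf p k ^2)^2"
  proof -
    have i1: "integrable M f" by (rule int)
    have i2: "integrable M (\<lambda>x. (f x)^2)" by (rule int)
    show ?thesis using variance_eq[OF i1 i2] Ef Ef2 by simp
  qed
  have "prob {x \<in> space M. \<bar>f x - expectation f\<bar> \<ge> t} \<le> variance f / t^2"
    by (rule Chebyshev_inequality) (auto simp: t M_def intro: intM[OF sp])
  also have "\<dots> \<le> ((\<Sum>k=1..n. pmf p k ^2) / real Q ^ 2 + 2 * (\<Sum>k=1..n. pmf p k ^3) / real Q) / t^2"
    unfolding var using var_bound[OF h(2)] t by (intro divide_right_mono) auto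
  finally have c: "prob {x \<in> space M. \<bar>f x - expectation f\<bar> \<ge> t} \<le> ((\<Sum>k=1..n. pmf p k ^2) / real Q ^ 2 + 2 * (\<Sum>k=1..n. pmf p k ^3) / real Q) / t^2" .
  have c2: "prob {x \<in> space M. \<bar>f x - (\<Sum>k=1..n. pmf p k ^2)\<bar> \<ge> t} \<le> ((\<Sum>k=1..n. pmf p k ^2) / real Q ^ 2 + 2 * (\<Sum>k=1..n. pmf p k ^3) / real Q) / t^2"
    using c unfolding Ef .
  show ?thesis using c2 unfolding f_def M_def by simp
qed

lemma stage_fail:
  assumes Q: "Q \<ge> 1" "4 * S * Q \<le> N" and S: "S \<ge> 1" and t: "t > 0"
    and q: "((\<Sum>k=1..n. pmf p k ^2) / real Q ^ 2 + 2 * (\<Sum>k=1..n. pmf p k ^3) / real Q) / t^2 \<le> 2/9"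
  shows "measure_pmf.prob (Pi_pmf {..<N} 0 (\<lambda>_. p))
           {x. \<not> \<bar>median (map (\<lambda>s. theta n x Q s) [0..<2 * S]) - (\<Sum>k=1..n. pmf p k ^2)\<bar> \<le> t}
         \<le> binom_tail S"
proof -
  define s2 where "s2 = (\<Sum>k=1..n. pmf p k ^2)"
  define MP where "MP = Pi_pmf {..<N} 0 (\<lambda>_. p)"
  define Bad where "Bad s = {x. t < \<bar>theta n x Q s - s2\<bar>}" for s
  define K where "K s = {2 * s * Q..<(2 * s+2) * Q}" for s
  define TT where "TT = {T. T \<subseteq> {..<2 * S} \<and> card T = S}"
  have finTT: "finite TT" unfolding TT_def by (rule finite_subset[of _ "Pow {..<2 * S}"]) auto
  have cardTT: "card TT = (2 * S) choose S" unfolding TT_def using n_subsets[of "{..<2 * S}" S] by simp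
  have pBad: "measure_pmf.prob MP (Bad s) \<le> 2/9" if "s < 2 * S" for s
  proof -
    have "(2 * s+2) * Q \<le> (4 * S) * Q" using that by (intro mult_right_mono) auto
    hence hs: "(2 * s+2) * Q \<le> N" using Q by (simp add: mult.assoc)
    have "measure_pmf.prob MP (Bad s) \<le> measure_pmf.prob MP {x. t \<le> \<bar>theta n x Q s - s2\<bar>}"
      unfolding Bad_def by (intro measure_pmf.finite_measure_mono) auto
    also have "\<dots> \<le> 2/9" using theta_tail[OF hs Q(1) t] q unfolding MP_def s2_def by linarith
    finally show ?thesis .
  qed
  have sub: "{x. \<not> \<bar>median (map (\<lambda>s. theta n x Q s) [0..<2 * S]) - s2\<bar> \<le> t} \<subseteq> (\<Union>T\<in>TT. \<Inter>s\<in>T. Bad s)"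
  proof
    fix x assume x: "x \<in> {x. \<not> \<bar>median (map (\<lambda>s. theta n x Q s) [0..<2 * S]) - s2\<bar> \<le> t}"
    define xs where "xs = map (\<lambda>s. theta n x Q s) [0..<2 * S]"
    have lx: "length xs = 2 * S" unfolding xs_def by simp
    have eqset: "{j. j < length xs \<and> \<not> (s2 - t \<le> xs!j \<and> xs!j \<le> s2 + t)} = {s \<in> {..<2 * S}. x \<in> Bad s}"
      unfolding xs_def Bad_def by auto
    have "\<not> card {j. j < length xs \<and> \<not> (s2 - t \<le> xs!j \<and> xs!j \<le> s2 + t)} < S"
    proof
      assume "card {j. j < length xs \<and> \<not> (s2 - t \<le> xs!j \<and> xs!j \<le> s2 + t)} < S"
      from median_good[OF lx S this] have "\<bar>median xs - s2\<bar> \<le> t" by linarith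
      with x show False unfolding xs_def by simp
    qed
    hence "S \<le> card {s \<in> {..<2 * S}. x \<in> Bad s}" unfolding eqset by simp
    then obtain T where T: "T \<subseteq> {s \<in> {..<2 * S}. x \<in> Bad s}" "card T = S" "finite T"
      by (rule obtain_subset_with_card_n)
    hence "T \<in> TT" unfolding TT_def by auto
    moreover have "x \<in> (\<Inter>s\<in>T. Bad s)" using T by auto
    ultimately show "x \<in> (\<Union>T\<in>TT. \<Inter>s\<in>T. Bad s)" by blast
  qed
  have "measure_pmf.prob MP {x. \<not> \<bar>median (map (\<lambda>s. theta n x Q s) [0..<2 * S]) - s2\<bar> \<le> t}
        \<le> measure_pmf.prob MP (\<Union>T\<in>TT. \<Inter>s\<in>T. Bad s)"
    by (intro measure_pmf.finite_measure_mono sub) auto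
  also have "\<dots> \<le> (\<Sum>T\<in>TT. measure_pmf.prob MP (\<Inter>s\<in>T. Bad s))"
    by (intro measure_subadditive_finite finTT) (auto simp: measure_pmf.emeasure_eq_measure)
  also have "\<dots> \<le> (\<Sum>T\<in>TT. (2/9::real)^S)"
  proof (intro sum_mono)
    fix T assume T: "T \<in> TT"
    have Tsub: "T \<subseteq> {..<2 * S}" and cT: "card T = S" using T unfolding TT_def by auto
    have finT: "finite T" using Tsub finite_subset by blast
    have Tne: "T \<noteq> {}" using cT S by auto
    have "measure_pmf.prob MP (\<Inter>s\<in>T. Bad s) = (\<Prod>s\<in>T. measure_pmf.prob MP (Bad s))"
      unfolding MP_def
    proof (rule indep_blocks_events[OF finT Tne, of K])
      fix s assume "s \<in> T"
      hence "s < 2 * S" using Tsub by auto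
      hence "(2 * s+2) * Q \<le> (4 * S) * Q" by (intro mult_right_mono) auto
      thus "K s \<subseteq> {..<N}" using Q unfolding K_def by (auto simp: mult.assoc)
    next
      show "disjoint_family_on K T" unfolding K_def by (rule blocks_disjoint)
    next
      fix s and x y :: "nat \<Rightarrow> nat" assume "s \<in> T" "\<And>i. i \<in> K s \<Longrightarrow> x i = y i"
      hence "theta n x Q s = theta n y Q s" unfolding K_def by (intro theta_dep) auto
      thus "x \<in> Bad s \<longleftrightarrow> y \<in> Bad s" unfolding Bad_def by simp
    qed
    also have "\<dots> \<le> (\<Prod>s\<in>T. (2/9::real))"
      by (intro prod_mono) (use pBad Tsub in auto)
    also have "\<dots> = (2/9)^S" using cT by simp
    finally show "measure_pmf.prob MP (\<Inter>s\<in>T. Bad s) \<le> (2/9)^S" .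
  qed
  also have "\<dots> = real ((2 * S) choose S) * (2/9)^S" using cardTT by simp
  also have "\<dots> \<le> binom_tail S" by (rule binom_tail_ge)
  finally show ?thesis unfolding MP_def s2_def .
qed

end

context
  fixes p :: "nat pmf" and n :: nat
  assumes n2: "n \<ge> 2" and sp: "set_pmf p \<subseteq> {1..n}"
begin

lemma sum1: "(\<Sum>k=1..n. pmf p k) = 1"
  by (rule sum_pmf_eq_1) (use sp in auto)

lemma s2_ge: "(\<Sum>k=1..n. pmf p k ^ 2) \<ge> 1 / real n"
proof -
  define c where "c = 1 / real n"
  have nc: "real n * c = 1" unfolding c_def using n2 by simp
  have "0 \<le> (\<Sum>k=1..n. (pmf p k - c)^2)" by (intro sum_nonneg) auto
  also have "\<dots> = (\<Sum>k=1..n. pmf p k ^ 2 - 2 * c * pmf p k + c^2)"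
    by (intro sum.cong refl) (simp add: power2_eq_square algebra_simps)
  also have "\<dots> = (\<Sum>k=1..n. pmf p k ^ 2) - 2 * c * (\<Sum>k=1..n. pmf p k) + real n * c^2"
    by (simp add: sum.distrib sum_subtractf sum_distrib_left)
  also have "\<dots> = (\<Sum>k=1..n. pmf p k ^ 2) - c"
    using sum1 nc by (simp add: power2_eq_square algebra_simps)
  finally show ?thesis unfolding c_def by simp
qed

lemma s2_le1: "(\<Sum>k=1..n. pmf p k ^ 2) \<le> 1"
proof -
  have "(\<Sum>k=1..n. pmf p k ^ 2) \<le> (\<Sum>k=1..n. pmf p k)"
  proof (intro sum_mono)
    fix k
    have "pmf p k * pmf p k \<le> pmf p k * 1" by (intro mult_left_mono) (auto simp: pmf_le_1)
    thus "pmf p k ^ 2 \<le> pmf p k" by (simp add: power2_eq_square)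
  qed
  thus ?thesis using sum1 by simp
qed

lemma s2_nonneg: "(\<Sum>k=1..n. pmf p k ^ 2) \<ge> 0" by (intro sum_nonneg) auto

lemma l2_sq: "l2norm p n ^ 2 = (\<Sum>k=1..n. pmf p k ^ 2)"
  unfolding l2norm_def using s2_nonneg by simp

lemma l2_pos: "l2norm p n > 0"
proof -
  have "1 / real n > 0" using n2 by simp
  hence "(\<Sum>k=1..n. pmf p k ^ 2) > 0" using s2_ge by linarith
  thus ?thesis unfolding l2norm_def by simp
qed

lemma l2_le1: "l2norm p n \<le> 1"
  unfolding l2norm_def using s2_le1 by simp

lemma pk_le: "pmf p k \<le> l2norm p n"
proof (cases "k \<in> {1..n}")
  case True
  have "pmf p k ^ 2 \<le> (\<Sum>k=1..n. pmf p k ^ 2)"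
    by (rule member_le_sum[OF True]) auto
  hence "sqrt (pmf p k ^ 2) \<le> l2norm p n" unfolding l2norm_def by (rule real_sqrt_le_mono)
  thus ?thesis by simp
next
  case False
  hence "k \<notin> set_pmf p" using sp by auto
  hence "pmf p k = 0" by (simp add: set_pmf_iff)
  thus ?thesis using l2_pos by simp
qed

lemma s3_le: "(\<Sum>k=1..n. pmf p k ^ 3) \<le> l2norm p n * (\<Sum>k=1..n. pmf p k ^ 2)"
proof -
  have "(\<Sum>k=1..n. pmf p k ^ 3) \<le> (\<Sum>k=1..n. l2norm p n * pmf p k ^ 2)"
  proof (intro sum_mono)
    fix k
    have "pmf p k * pmf p k ^ 2 \<le> l2norm p n * pmf p k ^ 2" by (intro mult_right_mono pk_le) auto
    thus "pmf p k ^ 3 \<le> l2norm p n * pmf p k ^ 2" by (simp add: power3_eq_cube power2_eq_square)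
  qed
  thus ?thesis by (simp add: sum_distrib_left)
qed

lemma rho_stages_le: "rho (stages n) \<le> l2norm p n"
proof -
  have "rho (stages n) ^ 2 = 2 powr (- real (stages n) / 2 + - real (stages n) / 2)"
    unfolding rho_def power2_eq_square by (rule powr_add[symmetric])
  also have "\<dots> = 2 powr (- real (stages n))" by simp
  also have "\<dots> = 1 / 2 powr real (stages n)" by (rule powr_minus_divide)
  also have "\<dots> \<le> 1 / real n"
    by (rule divide_left_mono) (use stages_pow[OF n2] n2 in auto)
  also have "\<dots> \<le> l2norm p n ^ 2" using s2_ge l2_sq by simp
  finally have h: "rho (stages n) ^ 2 \<le> l2norm p n ^ 2" .
  show ?thesis by (rule power2_le_imp_le[OF h]) (use l2_pos in simp)
qed

lemma i_of_props:
  "1 \<le> i_of n p" "i_of n p \<le> stages n" "rho (i_of n p) \<le> l2norm p n"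
  "\<And>i. 1 \<le> i \<Longrightarrow> i < i_of n p \<Longrightarrow> l2norm p n < rho i"
proof -
  have ex: "\<exists>i. 1 \<le> i \<and> i \<le> stages n \<and> rho i \<le> l2norm p n"
    using stages_ge1[OF n2] rho_stages_le by blast
  have L: "1 \<le> i_of n p \<and> i_of n p \<le> stages n \<and> rho (i_of n p) \<le> l2norm p n"
    unfolding i_of_def by (rule LeastI_ex[OF ex])
  thus "1 \<le> i_of n p" "i_of n p \<le> stages n" "rho (i_of n p) \<le> l2norm p n" by auto
  fix i assume i: "1 \<le> i" "i < i_of n p"
  have "\<not> (1 \<le> i \<and> i \<le> stages n \<and> rho i \<le> l2norm p n)"
    by (rule not_less_Least[OF i(2)[unfolded i_of_def]])
  thus "l2norm p n < rho i" using i L by auto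
qed

lemma l2_le_rho: "1 \<le> i \<Longrightarrow> i \<le> i_of n p \<Longrightarrow> l2norm p n \<le> sqrt 2 * rho i"
proof -
  assume i: "1 \<le> i" "i \<le> i_of n p"
  show ?thesis
  proof (cases "i = 1")
    case True
    have "rho 0 = 1" unfolding rho_def by simp
    hence "sqrt 2 * rho 1 = 1" using rho_Suc[of 0] by simp
    thus ?thesis using True l2_le1 by simp
  next
    case False
    hence "1 \<le> i - 1" "i - 1 < i_of n p" using i by auto
    hence "l2norm p n < rho (i - 1)" by (rule i_of_props(4))
    also have "rho (i - 1) = sqrt 2 * rho (Suc (i - 1))" by (rule rho_Suc)
    also have "Suc (i - 1) = i" using i by simp
    finally show ?thesis by simp
  qed
qed

end


lemma sqrt2_le: "sqrt 2 \<le> (3/2::real)"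
proof -
  have "sqrt 2 \<le> sqrt ((3/2::real)^2)" by (rule real_sqrt_le_mono) (simp add: power2_eq_square)
  thus ?thesis by simp
qed

lemma q_bound:
  fixes r K s2 s3 :: real and Q :: nat
  assumes r: "0 < r" and K: "0 < K" "K \<le> 1/324" and Q: "real Q \<ge> 1/(K*r)"
    and s2: "0 \<le> s2" "s2 \<le> 2*r^2" and s3: "0 \<le> s3" "s3 \<le> 3*r^3"
  shows "(s2 / real Q ^ 2 + 2 * s3 / real Q) / (r^2/3)^2 \<le> 2/9"
proof -
  have Kr: "K * r > 0" using K r by simp
  have Qp: "real Q > 0" using Q Kr by (smt (verit) divide_pos_pos zero_less_one)
  define a where "a = 1 / real Q"
  have a0: "0 \<le> a" unfolding a_def by simp
  have aK: "a \<le> K * r"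
  proof -
    have "1 / real Q \<le> 1 / (1/(K*r))" using Q Kr Qp by (intro divide_left_mono) auto
    thus ?thesis unfolding a_def using Kr by simp
  qed
  have e: "s2 / real Q ^ 2 + 2 * s3 / real Q = s2 * a^2 + 2 * s3 * a"
    unfolding a_def by (simp add: power_divide)
  have h1: "s2 * a^2 \<le> (2*r^2) * (K*r)^2"
    by (intro mult_mono power_mono) (use s2 a0 aK in auto)
  have h2: "s3 * a \<le> (3*r^3) * (K*r)"
    by (intro mult_mono) (use s3 a0 aK r K in auto)
  have h1': "(2*r^2) * (K*r)^2 = 2 * K^2 * (r^2 * r^2)" by (simp add: power2_eq_square algebra_simps)
  have h2': "(3*r^3) * (K*r) = 3 * K * (r^2 * r^2)" by (simp add: power2_eq_square power3_eq_cube algebra_simps)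
  define w where "w = r^2 * r^2"
  have w: "w > 0" unfolding w_def using r by simp
  have h3: "K^2 \<le> K / 324"
  proof -
    have "K * K \<le> K * (1/324)" using K by (intro mult_left_mono) auto
    thus ?thesis by (simp add: power2_eq_square)
  qed
  have "s2 * a^2 + 2 * s3 * a \<le> 2 * K^2 * w + 6 * K * w" using h1 h2 h1' h2' unfolding w_def by linarith
  also have "\<dots> \<le> 2 * (K/324) * w + 6 * (1/324) * w"
    using h3 K w by (intro add_mono mult_right_mono) auto
  also have "\<dots> \<le> 2 * ((1/324)/324) * w + 6 * (1/324) * w"
    using K w by (intro add_mono mult_right_mono) auto
  also have "\<dots> \<le> (2/9) * (w / 9)" using w by simp
  finally have X: "s2 / real Q ^ 2 + 2 * s3 / real Q \<le> (2/9) * (w/9)" unfolding e .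
  have eqw: "(r^2/3)^2 = w / 9" unfolding w_def by (simp add: power2_eq_square)
  have w9: "w / 9 > 0" using w by simp
  show ?thesis unfolding eqw using X by (simp only: pos_divide_le_eq[OF w9])
qed

lemma det:
  fixes n N :: nat and p :: "nat pmf" and \<delta> :: real and x :: "nat \<Rightarrow> nat"
  assumes n2: "n \<ge> 2" and sp: "set_pmf p \<subseteq> {1..n}"
    and NN: "4 * S_param n \<delta> * Q_param (i_of n p) \<le> N"
    and good: "\<And>i. 1 \<le> i \<Longrightarrow> i \<le> i_of n p \<Longrightarrow> \<bar>Theta n \<delta> x i - l2norm p n ^ 2\<bar> \<le> rho i ^ 2 / 3"
  shows "stop_stage n \<delta> N x \<le> i_of n p \<and> l2norm p n ^ 2 \<le> estimate n \<delta> N x \<and>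
         estimate n \<delta> N x \<le> 3 * l2norm p n ^ 2"
proof -
  define I where "I = i_of n p"
  define s2 where "s2 = l2norm p n ^ 2"
  have I1: "1 \<le> I" and Im: "I \<le> stages n" and rI: "rho I \<le> l2norm p n"
    using i_of_props[OF n2 sp] unfolding I_def by auto
  have rhoI: "rho I ^ 2 \<le> s2" unfolding s2_def using rI rho_pos[of I] by (intro power_mono) auto
  have gI: "\<bar>Theta n \<delta> x I - s2\<bar> \<le> rho I ^ 2 / 3" using good[OF I1] unfolding I_def s2_def by simp
  have TI: "Theta n \<delta> x I \<ge> 2 * rho I ^ 2 / 3" using gI rhoI unfolding abs_le_iff by linarith
  have scI: "1 \<le> I \<and> stop_cond n \<delta> N x I" unfolding stop_cond_def using TI I1 by auto
  define j where "j = stop_stage n \<delta> N x"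
  have jI: "j \<le> I" unfolding j_def stop_stage_def by (rule Least_le) (rule scI)
  have j: "1 \<le> j \<and> stop_cond n \<delta> N x j" unfolding j_def stop_stage_def by (rule LeastI) (rule scI)
  have Tj: "Theta n \<delta> x j \<ge> 2 * rho j ^ 2 / 3"
  proof (cases "j = I")
    case True thus ?thesis using TI by simp
  next
    case False
    hence jlt: "j < I" using jI by simp
    have "Q_param (j+1) \<le> Q_param I" using jlt by (intro Q_mono) simp
    hence "4 * S_param n \<delta> * Q_param (j+1) \<le> N" using NN unfolding I_def
      by (meson le_trans mult_le_mono2)
    moreover have "j \<noteq> stages n" using jlt Im by simp
    ultimately show ?thesis using j unfolding stop_cond_def by auto
  qed
  have gj: "\<bar>Theta n \<delta> x j - s2\<bar> \<le> rho j ^ 2 / 3" using good[of j] j jI unfolding I_def s2_def by simp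
  have est: "estimate n \<delta> N x = Theta n \<delta> x j + rho j ^ 2 / 3" unfolding estimate_def j_def Let_def by simp
  have "s2 \<le> Theta n \<delta> x j + rho j ^ 2 / 3 \<and> Theta n \<delta> x j + rho j ^ 2 / 3 \<le> 3 * s2"
    using gj Tj unfolding abs_le_iff by linarith
  thus ?thesis using jI unfolding est s2_def[symmetric] j_def[symmetric] I_def[symmetric] by simp
qed

lemma main_prob:
  fixes n N :: nat and p :: "nat pmf" and \<delta> :: real
  assumes n2: "n \<ge> 2" and sp: "set_pmf p \<subseteq> {1..n}" and d: "0 < \<delta>" "\<delta> < 1"
    and NN: "4 * S_param n \<delta> * Q_param (i_of n p) \<le> N"
  shows "measure_pmf.prob (Pi_pmf {..<N} 0 (\<lambda>_. p))
        {x. stop_stage n \<delta> N x \<le> i_of n p \<and>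
            l2norm p n ^ 2 \<le> estimate n \<delta> N x \<and> estimate n \<delta> N x \<le> 3 * l2norm p n ^ 2}
        \<ge> 1 - \<delta>"
proof -
  define I where "I = i_of n p"
  define S where "S = S_param n \<delta>"
  define m where "m = stages n"
  define L where "L = l2norm p n"
  define s2 where "s2 = (\<Sum>k=1..n. pmf p k ^ 2)"
  define s3 where "s3 = (\<Sum>k=1..n. pmf p k ^ 3)"
  define MP where "MP = Pi_pmf {..<N} 0 (\<lambda>_. p)"
  define G where "G i = {x. \<bar>Theta n \<delta> x i - s2\<bar> \<le> rho i ^ 2 / 3}" for i
  have I1: "1 \<le> I" and Im: "I \<le> m"
    using i_of_props[OF n2 sp] unfolding I_def m_def by auto
  have S1: "S \<ge> 1" and Sb: "binom_tail S \<le> \<delta> / real m"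
    using S_param_props[OF n2 d] unfolding S_def m_def by auto
  have m1: "real m \<ge> 1" using stages_ge1[OF n2] unfolding m_def by simp
  have L2: "L ^ 2 = s2" unfolding L_def s2_def by (rule l2_sq[OF n2 sp])
  have Lp: "L > 0" unfolding L_def by (rule l2_pos[OF n2 sp])
  have s3L: "s3 \<le> L * s2" unfolding s3_def L_def s2_def by (rule s3_le[OF n2 sp])
  have s2n: "s2 \<ge> 0" unfolding s2_def by (rule s2_nonneg[OF n2 sp])
  have s3n: "s3 \<ge> 0" unfolding s3_def by (intro sum_nonneg) auto
  have fail: "measure_pmf.prob MP (UNIV - G i) \<le> \<delta> / real m" if i: "1 \<le> i" "i \<le> I" for i
  proof -
    define Q where "Q = Q_param i"
    have Q1: "Q \<ge> 1" unfolding Q_def by (rule Q_pos)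
    have "Q \<le> Q_param I" unfolding Q_def using i by (intro Q_mono) simp
    hence QN: "4 * S * Q \<le> N" using NN unfolding S_def I_def by (meson le_trans mult_le_mono2)
    define r where "r = rho i"
    have r: "0 < r" "r \<le> 1" unfolding r_def by (auto simp: rho_pos rho_le1)
    have Lr: "L \<le> sqrt 2 * r" unfolding L_def r_def using l2_le_rho[OF n2 sp i[unfolded I_def]] .
    have s2r: "s2 \<le> 2 * r^2"
    proof -
      have "L^2 \<le> (sqrt 2 * r)^2" using Lr Lp by (intro power_mono) auto
      thus ?thesis using L2 by (simp add: power_mult_distrib)
    qed
    have s3r: "s3 \<le> 3 * r^3"
    proof -
      have "L * s2 \<le> (sqrt 2 * r) * (2 * r^2)" using Lr s2r Lp s2n by (intro mult_mono) auto
      also have "\<dots> \<le> ((3/2) * r) * (2 * r^2)" using sqrt2_le r by (intro mult_right_mono) auto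
      also have "\<dots> = 3 * r^3" by (simp add: power2_eq_square power3_eq_cube)
      finally show ?thesis using s3L by linarith
    qed
    have kap2: "kap^2 \<le> 1/324"
    proof -
      have "kap^2 \<le> (1/18)^2" using kap_le kap_pos by (intro power_mono) auto
      thus ?thesis by (simp add: power2_eq_square)
    qed
    have q: "(s2 / real Q ^ 2 + 2 * s3 / real Q) / (r^2/3)^2 \<le> 2/9"
      by (rule q_bound[OF r(1) _ kap2 _ s2n s2r s3n s3r])
         (use kap_pos Q_ge[of i] in \<open>auto simp: Q_def r_def\<close>)
    have t: "r^2/3 > 0" using r by simp
    have "measure_pmf.prob MP {x. \<not> \<bar>median (map (\<lambda>s. theta n x Q s) [0..<2 * S]) - s2\<bar> \<le> r^2/3}
          \<le> binom_tail S"
      unfolding MP_def s2_def by (rule stage_fail[OF sp Q1 QN S1 t]) (use q in \<open>simp add: s2_def s3_def\<close>)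
    moreover have "UNIV - G i = {x. \<not> \<bar>median (map (\<lambda>s. theta n x Q s) [0..<2 * S]) - s2\<bar> \<le> r^2/3}"
      unfolding G_def Theta_def Q_def S_def r_def by auto
    ultimately show ?thesis using Sb by simp
  qed
  have union: "measure_pmf.prob MP (\<Union>i\<in>{1..I}. UNIV - G i) \<le> \<delta>"
  proof -
    have "measure_pmf.prob MP (\<Union>i\<in>{1..I}. UNIV - G i) \<le> (\<Sum>i\<in>{1..I}. measure_pmf.prob MP (UNIV - G i))"
      by (intro measure_subadditive_finite) (auto simp: measure_pmf.emeasure_eq_measure)
    also have "\<dots> \<le> (\<Sum>i\<in>{1..I}. \<delta> / real m)" by (intro sum_mono fail) auto
    also have "\<dots> = real I * (\<delta> / real m)" by simp
    also have "\<dots> \<le> real m * (\<delta> / real m)" using Im d by (intro mult_right_mono) auto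
    also have "\<dots> = \<delta>" using m1 by simp
    finally show ?thesis .
  qed
  define Tgt where "Tgt = {x. stop_stage n \<delta> N x \<le> i_of n p \<and>
            l2norm p n ^ 2 \<le> estimate n \<delta> N x \<and> estimate n \<delta> N x \<le> 3 * l2norm p n ^ 2}"
  have sub: "UNIV - Tgt \<subseteq> (\<Union>i\<in>{1..I}. UNIV - G i)"
  proof
    fix x assume x: "x \<in> UNIV - Tgt"
    show "x \<in> (\<Union>i\<in>{1..I}. UNIV - G i)"
    proof (rule ccontr)
      assume "x \<notin> (\<Union>i\<in>{1..I}. UNIV - G i)"
      hence g: "\<And>i. 1 \<le> i \<Longrightarrow> i \<le> i_of n p \<Longrightarrow> \<bar>Theta n \<delta> x i - l2norm p n ^ 2\<bar> \<le> rho i ^ 2 / 3"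
        unfolding G_def I_def using L2 unfolding L_def by auto
      have "x \<in> Tgt" unfolding Tgt_def using det[OF n2 sp NN g] by simp
      with x show False by simp
    qed
  qed
  have e: "measure_pmf.prob MP Tgt = 1 - measure_pmf.prob MP (UNIV - Tgt)"
    using measure_pmf.prob_compl[of Tgt MP] by simp
  have le: "measure_pmf.prob MP (UNIV - Tgt) \<le> measure_pmf.prob MP (\<Union>i\<in>{1..I}. UNIV - G i)"
    by (intro measure_pmf.finite_measure_mono sub) auto
  have "measure_pmf.prob MP Tgt \<ge> 1 - \<delta>" using e le union by linarith
  thus ?thesis unfolding MP_def Tgt_def .
qed

lemma cbound:
  fixes n :: nat and p :: "nat pmf" and \<delta> :: real
  assumes n2: "n \<ge> 2" and sp: "set_pmf p \<subseteq> {1..n}" and d: "0 < \<delta>" "\<delta> < 1"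
  shows "real (4 * S_param n \<delta> * Q_param (i_of n p))
         \<le> (224 * (1/kap^2 + 1)) * max 1 (ln (ln (real n) / \<delta>)) / l2norm p n"
proof -
  define I where "I = i_of n p"
  define S where "S = S_param n \<delta>"
  define m where "m = stages n"
  define L where "L = l2norm p n"
  define Lg where "Lg = max 1 (ln (ln (real n) / \<delta>))"
  have I1: "1 \<le> I" using i_of_props[OF n2 sp] unfolding I_def by auto
  have Lp: "L > 0" unfolding L_def by (rule l2_pos[OF n2 sp])
  have LI: "L \<le> sqrt 2 * rho I" unfolding L_def I_def by (rule l2_le_rho[OF n2 sp]) (use I1 in \<open>auto simp: I_def\<close>)
  have rI: "0 < rho I" "rho I \<le> 1" by (auto simp: rho_pos rho_le1)
  have invr: "1 / rho I \<le> 2 / L"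
  proof -
    have "sqrt 2 * rho I \<le> 2 * rho I" by (intro mult_right_mono) (use sqrt2_le rI in auto)
    hence "L \<le> 2 * rho I" using LI by linarith
    hence "L / 2 \<le> rho I" by simp
    hence "1 / rho I \<le> 1 / (L / 2)" using Lp rI by (intro divide_left_mono) auto
    thus ?thesis by simp
  qed
  have k: "kap > 0" by (rule kap_pos)
  have ir1: "1 \<le> 1 / rho I" using rI by simp
  have Qb: "real (Q_param I) \<le> (1/kap^2 + 1) * (2 / L)"
  proof -
    have "real (Q_param I) \<le> 1 / (kap^2 * rho I) + 1" by (rule Q_le)
    also have "\<dots> = (1/kap^2) * (1 / rho I) + 1" by simp
    also have "\<dots> \<le> (1/kap^2) * (1 / rho I) + 1 / rho I" using ir1 by simp
    also have "\<dots> = (1/kap^2 + 1) * (1 / rho I)" by (simp add: algebra_simps)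
    also have "\<dots> \<le> (1/kap^2 + 1) * (2 / L)" using invr k by (intro mult_left_mono) auto
    finally show ?thesis .
  qed
  have Lg1: "Lg \<ge> 1" unfolding Lg_def by simp
  have Sb: "real S \<le> 28 * Lg"
  proof -
    have S0: "real S \<le> ln (real m / \<delta>) / ln (9/8) + 1"
      using S_param_props[OF n2 d] unfolding S_def m_def by auto
    have m1: "real m \<ge> 1" using stages_ge1[OF n2] unfolding m_def by simp
    have lmp: "ln (real m / \<delta>) > 0" using m1 d by (simp add: divide_simps)
    have l98: "ln (9/8::real) \<ge> 1/9" by (rule ln98_ge)
    have A: "ln (real m / \<delta>) / ln (9/8) \<le> 9 * ln (real m / \<delta>)"
    proof -
      have "ln (real m / \<delta>) = 9 * ln (real m / \<delta>) * (1/9)" by simp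
      also have "\<dots> \<le> 9 * ln (real m / \<delta>) * ln (9/8)" using lmp l98 by (intro mult_left_mono) auto
      finally show ?thesis using l98 by (simp add: divide_le_eq)
    qed
    have lnn: "ln (real n) > 0" using n2 by simp
    have B: "ln (real m / \<delta>) \<le> ln (4 * (ln (real n) / \<delta>))"
    proof -
      have "real m / \<delta> \<le> 4 * ln (real n) / \<delta>" using stages_le_ln[OF n2] d unfolding m_def
        by (intro divide_right_mono) auto
      thus ?thesis using m1 d lnn by (subst ln_le_cancel_iff) (auto simp: divide_simps)
    qed
    have C: "ln (4 * (ln (real n) / \<delta>)) = ln 4 + ln (ln (real n) / \<delta>)"
      by (rule ln_mult_pos) (use lnn d in auto)
    have l4: "ln (4::real) \<le> 2"
    proof -
      have "ln (4::real) = ln (2 * 2)" by simp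
      also have "\<dots> = ln 2 + ln 2" by (rule ln_mult_pos) auto
      finally show ?thesis using ln2_le by simp
    qed
    have D: "ln (ln (real n) / \<delta>) \<le> Lg" unfolding Lg_def by simp
    show ?thesis using S0 A B C l4 D Lg1 by linarith
  qed
  have "real (4 * S * Q_param I) = 4 * real S * real (Q_param I)" by simp
  also have "\<dots> \<le> 4 * (28 * Lg) * ((1/kap^2 + 1) * (2 / L))"
    using Sb Qb by (intro mult_mono mult_left_mono) auto
  also have "\<dots> = (224 * (1/kap^2 + 1)) * Lg / L" by (simp add: field_simps)
  finally show ?thesis unfolding S_def I_def Lg_def L_def .
qed

theorem proposition2:
  shows "\<exists>C::real. \<forall>(n::nat) (p::nat pmf) (\<delta>::real) (N::nat).
    2 \<le> n \<and> set_pmf p \<subseteq> {1..n} \<and> 0 < \<delta> \<and> \<delta> < 1 \<and>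
    4 * S_param n \<delta> * Q_param (i_of n p) \<le> N \<longrightarrow>
      measure_pmf.prob (Pi_pmf {..<N} 0 (\<lambda>_. p))
        {x. stop_stage n \<delta> N x \<le> i_of n p \<and>
            l2norm p n ^ 2 \<le> estimate n \<delta> N x \<and> estimate n \<delta> N x \<le> 3 * l2norm p n ^ 2}
        \<ge> 1 - \<delta> \<and>
      (\<forall>x. stop_stage n \<delta> N x \<le> i_of n p \<longrightarrow>
            obs_used n \<delta> N x \<le> 4 * S_param n \<delta> * Q_param (i_of n p)) \<and>
      real (4 * S_param n \<delta> * Q_param (i_of n p))
        \<le> C * max 1 (ln (ln (real n) / \<delta>)) / l2norm p n"
proof (intro exI[of _ "224 * (1/kap^2 + 1)"] allI impI conjI)
  fix n N :: nat and p :: "nat pmf" and \<delta> :: real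
  assume H: "2 \<le> n \<and> set_pmf p \<subseteq> {1..n} \<and> 0 < \<delta> \<and> \<delta> < 1 \<and> 4 * S_param n \<delta> * Q_param (i_of n p) \<le> N"
  hence n2: "n \<ge> 2" and sp: "set_pmf p \<subseteq> {1..n}" and d: "0 < \<delta>" "\<delta> < 1"
    and NN: "4 * S_param n \<delta> * Q_param (i_of n p) \<le> N" by auto
  show "measure_pmf.prob (Pi_pmf {..<N} 0 (\<lambda>_. p))
        {x. stop_stage n \<delta> N x \<le> i_of n p \<and>
            l2norm p n ^ 2 \<le> estimate n \<delta> N x \<and> estimate n \<delta> N x \<le> 3 * l2norm p n ^ 2}
        \<ge> 1 - \<delta>" by (rule main_prob[OF n2 sp d NN])
  show "real (4 * S_param n \<delta> * Q_param (i_of n p))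
        \<le> (224 * (1/kap^2 + 1)) * max 1 (ln (ln (real n) / \<delta>)) / l2norm p n"
    by (rule cbound[OF n2 sp d])
  fix x
  assume "stop_stage n \<delta> N x \<le> i_of n p"
  hence "Q_param (stop_stage n \<delta> N x) \<le> Q_param (i_of n p)" by (rule Q_mono)
  thus "obs_used n \<delta> N x \<le> 4 * S_param n \<delta> * Q_param (i_of n p)"
    unfolding obs_used_def by (intro mult_le_mono2)
qed

end
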